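(* Suppose $G_1=G_2=\dots=G_n$. Let $\bar k=\min\{k\in\{1,\dots,n\}: k>\frac{U_1^-}{U_1^++U_1^-}\,n\}$. Then the qualified majority rule $f^{(\bar k)}$ solves program (OPT), i.e., it maximizes $W(f)$ over all SCFs $f$ that are anonymous and BIC. In particular, the maximal expected welfare in (OPT) is attained by an ordinal SCF.
   Context: There are $n\ge 2$ agents $N=\{1,\dots,n\}$ choosing between a Reform $R$ and the Status quo $S$. Agent $i$ gets utility $0$ if $S$ is chosen and utility $v_i\in\mathbb{R}$ if $R$ is chosen. Values are independent random variables $\tilde v_1,\dots,\tilde v_n$, $\tilde v_i\sim G_i$ (Borel probability distributions on $\mathbb{R}$, $G_i(0)=\Pr(\tilde v_i\le 0)$). Standing assumptions: all $\tilde v_i$ have the same support $V$ with $0\notin V$; $\mathbb{E}|\tilde v_i|<\infty$; $p_i:=1-G_i(0)\in(0,1)$. Let $U_i^+=\mathbb{E}(\tilde v_i\mid \tilde v_i>0)$ and $U_i^-=\mathbb{E}(|\tilde v_i|\mid\tilde v_i<0)$ (both positive and finite). An SCF is a Borel measurable $f:V^n\to[0,1]$ (probability of choosing $R$). $f$ is anonymous if $f(v)=f(\pi v)$ for every $v\in V^n$ and every permutation $\pi$ of $N$, where $\pi v=(v_{\pi(1)},\dots,v_{\pi(n)})$. $f$ is BIC if for every $i$ and all $v_i,v_i'\in V$: $v_i\,\mathbb{E}(f(v_i,\tilde v_{-i}))\ge v_i\,\mathbb{E}(f(v_i',\tilde v_{-i}))$ (expectation over $\tilde v_{-i}=(\tilde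 v_j)_{j\neq i}$). Expected welfare is $W(f)=\mathbb{E}\big(f(\tilde v)\sum_{i=1}^n\tilde v_i\big)$. Program (OPT): maximize $W(f)$ subject to $f$ being anonymous and BIC. For $v\in V^n$ let $\chi(v)=\{i\in N: v_i>0\}$. $f$ is ordinal if $f(v)=f(v')$ whenever $\chi(v)=\chi(v')$. For $k\in\{1,\dots,n\}$, the qualified majority rule $f^{(k)}$ is $f^{(k)}(v)=1$ if $|\chi(v)|\ge k$ and $f^{(k)}(v)=0$ otherwise. *)

theory Defs
  imports "HOL-Probability.Probability"
begin

text \<open>Agents are indexed by {..<n}; a profile is an extensional function
  v :: nat => real with v i in V for i < n (i.e. v in PiE {..<n} (\<lambda>_. V)).
  All G_i coincide with a single Borel probability measure G.\<close>

definition supp :: "real measure \<Rightarrow> real set" where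
  "supp G = {x. \<forall>e>0. measure G (ball x e) > 0}"

definition Uplus :: "real measure \<Rightarrow> real" where
  "Uplus G = (\<integral>x. x * indicator {0<..} x \<partial>G) / measure G {0<..}"

definition Uminus :: "real measure \<Rightarrow> real" where
  "Uminus G = (\<integral>x. \<bar>x\<bar> * indicator {..<0} x \<partial>G) / measure G {..<0}"

definition kbar :: "nat \<Rightarrow> real measure \<Rightarrow> nat" where
  "kbar n G = (LEAST k. 1 \<le> k \<and> k \<le> n \<and>
       real k > Uminus G / (Uplus G + Uminus G) * real n)"

definition SCF :: "nat \<Rightarrow> real set \<Rightarrow> ((nat \<Rightarrow> real) \<Rightarrow> real) \<Rightarrow> bool" where
  "SCF n V f \<longleftrightarrow> f \<in> borel_measurable (PiM {..<n} (\<lambda>_. borel)) \<and>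
     (\<forall>v\<in>PiE {..<n} (\<lambda>_. V). 0 \<le> f v \<and> f v \<le> 1)"

definition anonymous :: "nat \<Rightarrow> real set \<Rightarrow> ((nat \<Rightarrow> real) \<Rightarrow> real) \<Rightarrow> bool" where
  "anonymous n V f \<longleftrightarrow>
     (\<forall>v\<in>PiE {..<n} (\<lambda>_. V). \<forall>\<pi>. \<pi> permutes {..<n} \<longrightarrow> f (v \<circ> \<pi>) = f v)"

text \<open>Interim expected probability of R for agent i reporting a,
  expectation over the other agents' values.\<close>
definition interim :: "nat \<Rightarrow> real measure \<Rightarrow> ((nat \<Rightarrow> real) \<Rightarrow> real) \<Rightarrow> nat \<Rightarrow> real \<Rightarrow> real" where
  "interim n G f i a = (\<integral>w. f (w(i := a)) \<partial>PiM ({..<n} - {i}) (\<lambda>_. G))"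

definition BIC :: "nat \<Rightarrow> real measure \<Rightarrow> real set \<Rightarrow> ((nat \<Rightarrow> real) \<Rightarrow> real) \<Rightarrow> bool" where
  "BIC n G V f \<longleftrightarrow> (\<forall>i<n. \<forall>a\<in>V. \<forall>b\<in>V. a * interim n G f i a \<ge> a * interim n G f i b)"

definition welfare :: "nat \<Rightarrow> real measure \<Rightarrow> ((nat \<Rightarrow> real) \<Rightarrow> real) \<Rightarrow> real" where
  "welfare n G f = (\<integral>v. f v * (\<Sum>i<n. v i) \<partial>PiM {..<n} (\<lambda>_. G))"

definition chi :: "nat \<Rightarrow> (nat \<Rightarrow> real) \<Rightarrow> nat set" where
  "chi n v = {i\<in>{..<n}. v i > 0}"

definition ordinal :: "nat \<Rightarrow> real set \<Rightarrow> ((nat \<Rightarrow> real) \<Rightarrow> real) \<Rightarrow> bool" where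
  "ordinal n V f \<longleftrightarrow> (\<forall>v\<in>PiE {..<n} (\<lambda>_. V). \<forall>v'\<in>PiE {..<n} (\<lambda>_. V). chi n v = chi n v' \<longrightarrow> f v = f v')"

definition qmaj :: "nat \<Rightarrow> nat \<Rightarrow> (nat \<Rightarrow> real) \<Rightarrow> real" where
  "qmaj n k v = (if card (chi n v) \<ge> k then 1 else 0)"

end

theory Submission
  imports Defs
begin

lemma decomp:
  fixes n i :: nat and G :: "real measure" and g :: "(nat \<Rightarrow> real) \<Rightarrow> real"
  assumes P: "prob_space G" and i: "i < n"
    and g: "integrable (PiM {..<n} (\<lambda>_. G)) g"
  shows "integral\<^sup>L (PiM {..<n} (\<lambda>_. G)) g
        = (\<integral>a. (\<integral>w. g (w(i:=a)) \<partial>PiM ({..<n}-{i}) (\<lambda>_. G)) \<partial>G)"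
    and "(\<lambda>a. \<integral>w. g (w(i:=a)) \<partial>PiM ({..<n}-{i}) (\<lambda>_. G)) \<in> borel_measurable G"
proof -
  define Oi where "Oi = {..<n}-{i}"
  have ins: "insert i Oi = {..<n}" using i by (auto simp: Oi_def)
  interpret PP: product_prob_space "(\<lambda>_. G) :: nat \<Rightarrow> real measure" by (rule product_prob_spaceI) (rule P)
  interpret PO: prob_space "PiM Oi (\<lambda>_. G)" by (rule prob_space_PiM) (rule P)
  interpret G: prob_space G by (rule P)
  interpret PS: pair_sigma_finite "PiM Oi (\<lambda>_. G)" G
    by (intro pair_sigma_finite.intro prob_space_imp_sigma_finite P PO.prob_space_axioms)
  have fin: "finite Oi" "i \<notin> Oi" unfolding Oi_def by auto
  have g': "integrable (PiM (insert i Oi) (\<lambda>_. G)) g" using g ins by simp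
  have gm: "g \<in> borel_measurable (PiM (insert i Oi) (\<lambda>_. G))" using g' by auto
  have m2: "(\<lambda>(x,y). g (x(i:=y))) \<in> borel_measurable (PiM Oi (\<lambda>_. G) \<Otimes>\<^sub>M G)"
    using measurable_compose[OF measurable_add_dim[of i Oi "\<lambda>_. G"] gm]
    by (simp add: case_prod_beta')
  have int2: "integrable (PiM Oi (\<lambda>_. G) \<Otimes>\<^sub>M G) (\<lambda>(x,y). g (x(i:=y)))"
  proof -
    have "(\<integral>\<^sup>+z. ennreal (norm ((\<lambda>(x,y). g (x(i:=y))) z)) \<partial>(PiM Oi (\<lambda>_. G) \<Otimes>\<^sub>M G))
        = (\<integral>\<^sup>+x. \<integral>\<^sup>+y. ennreal (norm (g (x(i:=y)))) \<partial>G \<partial>PiM Oi (\<lambda>_. G))"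
      by (subst sigma_finite_measure.nn_integral_fst[OF prob_space_imp_sigma_finite[OF P], symmetric])
         (use m2 in \<open>auto simp: case_prod_beta'\<close>)
    also have "\<dots> = (\<integral>\<^sup>+v. ennreal (norm (g v)) \<partial>PiM (insert i Oi) (\<lambda>_. G))"
      by (rule PP.product_nn_integral_insert[symmetric, OF fin]) (use gm in measurable)
    also have "\<dots> < \<infinity>" using g' by (simp add: integrable_iff_bounded)
    finally show ?thesis using m2 by (simp add: integrable_iff_bounded case_prod_beta')
  qed
  have "integral\<^sup>L (PiM (insert i Oi) (\<lambda>_. G)) g
        = (\<integral>x. (\<integral>y. g (x(i:=y)) \<partial>G) \<partial>PiM Oi (\<lambda>_. G))"
    by (rule PP.product_integral_insert[OF fin g'])
  also have "\<dots> = (\<integral>y. (\<integral>x. g (x(i:=y)) \<partial>PiM Oi (\<lambda>_. G)) \<partial>G)"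
    by (rule PS.Fubini_integral[symmetric]) (use int2 in simp)
  finally show "integral\<^sup>L (PiM {..<n} (\<lambda>_. G)) g
        = (\<integral>a. (\<integral>w. g (w(i:=a)) \<partial>PiM ({..<n}-{i}) (\<lambda>_. G)) \<partial>G)"
    using ins by (simp add: Oi_def)
  have m3: "(\<lambda>(a,w). g (w(i:=a))) \<in> borel_measurable (G \<Otimes>\<^sub>M PiM Oi (\<lambda>_. G))"
    using m2 measurable_pair_swap_iff[of "\<lambda>(a,w). g (w(i:=a))" G "PiM Oi (\<lambda>_. G)" borel] by (simp add: case_prod_beta')
  show "(\<lambda>a. \<integral>w. g (w(i:=a)) \<partial>PiM ({..<n}-{i}) (\<lambda>_. G)) \<in> borel_measurable G"
    using PO.borel_measurable_lebesgue_integral[of "\<lambda>a w. g (w(i:=a))" G] m3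
    by (simp add: Oi_def case_prod_beta')
qed


locale setting =
  fixes G :: "real measure" and n :: nat
  assumes n2: "n \<ge> 2" and P: "prob_space G" and sG: "sets G = sets borel"
    and s0: "0 \<notin> supp G" and intx: "integrable G (\<lambda>x. x)"
    and pp: "0 < measure G {0<..}" and pp1: "measure G {0<..} < 1"

sublocale setting \<subseteq> G: prob_space G by (rule P)

context setting
begin

abbreviation "PP \<equiv> PiM {..<n} (\<lambda>_. G)"

lemma spaceG: "space G = UNIV"
  using sets_eq_imp_space_eq[OF sG] by simp

lemma PPprob: "prob_space PP" by (rule prob_space_PiM) (rule P)

lemma setsG[measurable_cong]: "sets G = sets borel" by (rule sG)

lemma AE_supp: "AE x in G. x \<in> supp G"
proof -
  have cnt: "countable (\<rat> \<times> \<rat>)" by (intro countable_SIGMA countable_rat)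
  have "AE y in G. \<forall>qr\<in>\<rat>\<times>\<rat>. (snd qr > 0 \<and> measure G (ball (fst qr) (snd qr)) = 0 \<longrightarrow> y \<notin> ball (fst qr) (snd qr))"
  proof (rule AE_ball_countable'[OF _ cnt])
    fix qr :: "real \<times> real"
    show "AE y in G. (snd qr > 0 \<and> measure G (ball (fst qr) (snd qr)) = 0 \<longrightarrow> y \<notin> ball (fst qr) (snd qr))"
    proof (cases "measure G (ball (fst qr) (snd qr)) = 0")
      case True
      have bs: "ball (fst qr) (snd qr) \<in> sets G" using sG by simp
      have "ball (fst qr) (snd qr) \<in> null_sets G"
        using True bs by (simp add: G.emeasure_eq_measure null_sets_def)
      from AE_not_in[OF this] show ?thesis by (rule eventually_mono) simp
    qed simp
  qed
  then show ?thesis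
  proof (rule eventually_mono)
    fix y assume H: "\<forall>qr\<in>\<rat>\<times>\<rat>. (snd qr > 0 \<and> measure G (ball (fst qr) (snd qr)) = 0 \<longrightarrow> y \<notin> ball (fst qr) (snd qr))"
    show "y \<in> supp G" unfolding supp_def
    proof (intro CollectI allI impI)
      fix e :: real assume e: "e > 0"
      show "measure G (ball y e) > 0"
      proof (rule ccontr)
        assume "\<not> measure G (ball y e) > 0"
        then have z: "measure G (ball y e) = 0" using measure_nonneg[of G "ball y e"] by linarith
        obtain q where q: "q \<in> \<rat>" "y < q" "q < y + e/4" using Rats_dense_in_real[of y "y + e/4"] e by auto
        obtain r where r: "r \<in> \<rat>" "e/4 < r" "r < e/2" using Rats_dense_in_real[of "e/4" "e/2"] e by auto
        have sub: "ball q r \<subseteq> ball y e"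
        proof
          fix z assume "z \<in> ball q r"
          then have "dist q z < r" by simp
          then show "z \<in> ball y e" using q r by (simp add: dist_real_def)
        qed
        have "measure G (ball q r) \<le> measure G (ball y e)"
          by (rule G.finite_measure_mono[OF sub]) (simp add: sG)
        then have "measure G (ball q r) = 0" using z measure_nonneg[of G "ball q r"] by linarith
        moreover have "y \<in> ball q r" using q r by (simp add: dist_real_def)
        ultimately show False using H q(1) r(1) r(2) e by force
      qed
    qed
  qed
qed

lemma AE_PP: "AE v in PP. v \<in> PiE {..<n} (\<lambda>_. supp G)"
proof -
  have "AE v in PP. \<forall>j\<in>{..<n}. v j \<in> supp G"
  proof (rule AE_finite_allI)
    fix j assume "j \<in> {..<n}"
    then show "AE v in PP. v j \<in> supp G"
      using AE_PiM_component[of "{..<n}" "\<lambda>_. G" j "\<lambda>x. x \<in> supp G"] P AE_supp by auto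
  qed simp
  then show ?thesis
    using AE_space[of PP] by eventually_elim (auto simp: space_PiM PiE_def)
qed


lemma m0: "measure G {0} = 0"
proof -
  have "measure G {0} = measure G {}"
    by (rule measure_eq_AE) (use AE_supp s0 in \<open>auto elim!: eventually_mono simp: sG\<close>)
  then show ?thesis by simp
qed

lemma pm: "0 < measure G {..<0}"
proof -
  have "1 = measure G UNIV" using G.prob_space spaceG by simp
  also have "UNIV = {..<(0::real)} \<union> ({0} \<union> {0<..})" by auto
  also have "measure G \<dots> = measure G {..<0} + (measure G {0} + measure G {0<..})"
    by (subst G.finite_measure_Union; (subst G.finite_measure_Union)?) (auto simp: sG)
  finally show ?thesis using m0 pp1 by simp
qed

lemma intS: "S \<in> sets borel \<Longrightarrow> integrable G (\<lambda>x. x * indicator S x)"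
  using integrable_mult_indicator[of S G "\<lambda>x. x", OF _ intx] by (simp add: sG mult.commute)

lemma Up_eq: "(\<integral>x. x * indicator {0<..} x \<partial>G) = Uplus G * measure G {0<..}"
  using pp by (simp add: Uplus_def)

lemma Um_eq: "(\<integral>x. x * indicator {..<0} x \<partial>G) = - (Uminus G * measure G {..<0})"
proof -
  have "(\<integral>x. \<bar>x\<bar> * indicator {..<0} x \<partial>G) = (\<integral>x. - (x * indicator {..<0} x) \<partial>G)"
    by (rule Bochner_Integration.integral_cong) (auto simp: indicator_def)
  then show ?thesis using pm by (simp add: Uminus_def)
qed

lemma Up_pos: "Uplus G > 0"
proof -
  have i: "integrable G (\<lambda>x. x * indicator {0<..} x)" by (rule intS) simp
  have nn: "AE x in G. 0 \<le> x * indicator {0<..} x" by (auto simp: indicator_def)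
  have "(\<integral>x. x * indicator {0<..} x \<partial>G) \<noteq> 0"
  proof
    assume "(\<integral>x. x * indicator {0<..} x \<partial>G) = 0"
    then have "AE x in G. x * indicator {0<..} x = 0" using integral_nonneg_eq_0_iff_AE[OF i nn] by simp
    then have "measure G {0<..} = measure G {}"
      by (intro measure_eq_AE) (auto elim!: eventually_mono simp: sG indicator_def)
    then show False using pp by simp
  qed
  moreover have "(\<integral>x. x * indicator {0<..} x \<partial>G) \<ge> 0" by (rule integral_nonneg_AE[OF nn])
  ultimately show ?thesis using pp by (simp add: Uplus_def)
qed

lemma Um_nonneg: "Uminus G \<ge> 0"
  unfolding Uminus_def by (intro divide_nonneg_nonneg integral_nonneg) auto

lemma meas_PP: "F \<in> borel_measurable (PiM {..<n} (\<lambda>_. borel)) \<Longrightarrow> F \<in> borel_measurable PP"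
  using measurable_cong_sets[OF sets_PiM_cong[of "{..<n}" "{..<n}" "\<lambda>_. G" "\<lambda>_. borel"] refl] sG by simp

lemma meas_upd:
  assumes F: "F \<in> borel_measurable PP" and i: "i < n"
  shows "(\<lambda>w. F (w(i:=a))) \<in> borel_measurable (PiM ({..<n}-{i}) (\<lambda>_. G))"
proof -
  have "(\<lambda>w. (id w)(i:=(\<lambda>_. a) w)) \<in> measurable (PiM ({..<n}-{i}) (\<lambda>_. G)) PP"
    by (rule measurable_fun_upd[of _ "{..<n}-{i}"]) (use i in \<open>auto simp: spaceG\<close>)
  from measurable_compose[OF this F] show ?thesis by simp
qed


lemma comp_int:
  fixes \<phi> :: "real \<Rightarrow> real"
  assumes phi: "integrable G \<phi>" and i: "i < n"
  shows "integrable PP (\<lambda>v. \<phi> (v i))"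
proof -
  have pm: "\<phi> \<in> borel_measurable G" using phi by auto
  have cm: "(\<lambda>v. v i) \<in> measurable PP G" using i by simp
  have "integrable (distr PP G (\<lambda>v. v i)) \<phi>"
    using distr_PiM_component[of "{..<n}" "\<lambda>_. G" i] P i phi by simp
  then show ?thesis using integrable_distr_eq[OF cm pm] by simp
qed

lemma abs_le1: "0 \<le> (t::real) \<Longrightarrow> t \<le> 1 \<Longrightarrow> \<bar>t * y\<bar> \<le> \<bar>y\<bar>"
  by (simp add: abs_mult mult_left_le_one_le)

lemma half_gen:
  fixes \<phi> :: "real \<Rightarrow> real" and f :: "(nat \<Rightarrow> real) \<Rightarrow> real"
  assumes i: "i < n" and fm: "f \<in> borel_measurable PP" and fb: "AE v in PP. 0 \<le> f v \<and> f v \<le> 1"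
    and c: "AE a in G. a \<in> S \<longrightarrow> interim n G f i a = c"
    and phi: "integrable G \<phi>" and phi0: "\<And>x. x \<notin> S \<Longrightarrow> \<phi> x = 0"
  shows "(\<integral>v. f v * \<phi> (v i) \<partial>PP) = c * (\<integral>x. \<phi> x \<partial>G)"
proof -
  have pint: "integrable PP (\<lambda>v. \<phi> (v i))" by (rule comp_int[OF phi i])
  have pm: "\<phi> \<in> borel_measurable G" using phi by auto
  have cm: "(\<lambda>v. v i) \<in> measurable PP G" using i by simp
  have gm: "(\<lambda>v. f v * \<phi> (v i)) \<in> borel_measurable PP"
    using measurable_compose[OF cm pm] fm by simp
  have g: "integrable PP (\<lambda>v. f v * \<phi> (v i))"
    by (rule Bochner_Integration.integrable_bound[OF pint gm]) (use fb in \<open>rule eventually_mono, simp add: abs_le1\<close>)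
  note D = decomp[OF P i g]
  have inner: "(\<lambda>a. \<integral>w. f (w(i:=a)) * \<phi> ((w(i:=a)) i) \<partial>PiM ({..<n}-{i}) (\<lambda>_. G))
      = (\<lambda>a. interim n G f i a * \<phi> a)"
    by (simp add: interim_def)
  have "(\<integral>v. f v * \<phi> (v i) \<partial>PP) = (\<integral>a. interim n G f i a * \<phi> a \<partial>G)"
    using D(1) inner by simp
  also have "\<dots> = (\<integral>a. c * \<phi> a \<partial>G)"
  proof (rule integral_cong_AE)
    show "(\<lambda>a. interim n G f i a * \<phi> a) \<in> borel_measurable G" using D(2) inner by simp
    show "(\<lambda>a. c * \<phi> a) \<in> borel_measurable G" using pm by simp
    show "AE a in G. interim n G f i a * \<phi> a = c * \<phi> a"
      using c by (rule eventually_mono) (metis mult_zero_right phi0)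
  qed
  also have "\<dots> = c * (\<integral>x. \<phi> x \<partial>G)" by simp
  finally show ?thesis .
qed


lemma int_gen:
  fixes \<phi> :: "real \<Rightarrow> real" and f :: "(nat \<Rightarrow> real) \<Rightarrow> real"
  assumes i: "i < n" and fm: "f \<in> borel_measurable PP" and fb: "AE v in PP. 0 \<le> f v \<and> f v \<le> 1"
    and phi: "integrable G \<phi>"
  shows "integrable PP (\<lambda>v. f v * \<phi> (v i))"
proof -
  have pint: "integrable PP (\<lambda>v. \<phi> (v i))" by (rule comp_int[OF phi i])
  have pm: "\<phi> \<in> borel_measurable G" using phi by auto
  have cm: "(\<lambda>v. v i) \<in> measurable PP G" using i by simp
  have gm: "(\<lambda>v. f v * \<phi> (v i)) \<in> borel_measurable PP"
    using measurable_compose[OF cm pm] fm by simp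
  show ?thesis
    by (rule Bochner_Integration.integrable_bound[OF pint gm]) (use fb in \<open>rule eventually_mono, simp add: abs_le1\<close>)
qed

lemma SCF_facts:
  assumes "SCF n (supp G) f"
  shows "f \<in> borel_measurable PP" and "AE v in PP. 0 \<le> f v \<and> f v \<le> 1"
  using assms AE_PP by (auto simp: SCF_def intro: meas_PP elim!: eventually_mono)

lemma exists_pos: "\<exists>a0\<in>supp G. a0 > 0"
proof (rule ccontr)
  assume "\<not> ?thesis"
  then have "AE x in G. x \<in> {0<..} \<longleftrightarrow> x \<in> {}" using AE_supp by (auto elim!: eventually_mono)
  then have "measure G {0<..} = measure G {}" by (rule measure_eq_AE) (auto simp: sG)
  then show False using pp by simp
qed

lemma exists_neg: "\<exists>a0\<in>supp G. a0 < 0"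
proof (rule ccontr)
  assume "\<not> ?thesis"
  then have "AE x in G. x \<in> {..<0} \<longleftrightarrow> x \<in> {}" using AE_supp by (auto elim!: eventually_mono)
  then have "measure G {..<0} = measure G {}" by (rule measure_eq_AE) (auto simp: sG)
  then show False using pm by simp
qed

lemma bic_const:
  assumes B: "BIC n G (supp G) f" and i: "i < n"
  shows "\<exists>c. AE a in G. a \<in> {0<..} \<longrightarrow> interim n G f i a = c"
    and "\<exists>c. AE a in G. a \<in> {..<0} \<longrightarrow> interim n G f i a = c"
proof -
  obtain a0 where a0: "a0 \<in> supp G" "a0 > 0" using exists_pos by blast
  have "AE a in G. a \<in> {0<..} \<longrightarrow> interim n G f i a = interim n G f i a0"
    using AE_supp
  proof (rule eventually_mono, intro impI)
    fix a assume a: "a \<in> supp G" "a \<in> {0<..}"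
    have "a * interim n G f i a \<ge> a * interim n G f i a0" using B a a0 i by (auto simp: BIC_def)
    then have 1: "interim n G f i a \<ge> interim n G f i a0" using a by (simp add: mult_le_cancel_left_pos)
    have "a0 * interim n G f i a0 \<ge> a0 * interim n G f i a" using B a a0 i by (auto simp: BIC_def)
    then have 2: "interim n G f i a0 \<ge> interim n G f i a" using a0 by (simp add: mult_le_cancel_left_pos)
    show "interim n G f i a = interim n G f i a0" using 1 2 by linarith
  qed
  then show "\<exists>c. AE a in G. a \<in> {0<..} \<longrightarrow> interim n G f i a = c" by blast
next
  obtain a0 where a0: "a0 \<in> supp G" "a0 < 0" using exists_neg by blast
  have "AE a in G. a \<in> {..<0} \<longrightarrow> interim n G f i a = interim n G f i a0"
    using AE_supp
  proof (rule eventually_mono, intro impI)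
    fix a assume a: "a \<in> supp G" "a \<in> {..<0}"
    have "a * interim n G f i a \<ge> a * interim n G f i a0" using B a a0 i by (auto simp: BIC_def)
    then have 1: "interim n G f i a \<le> interim n G f i a0" using a by (simp add: mult_le_cancel_left_neg)
    have "a0 * interim n G f i a0 \<ge> a0 * interim n G f i a" using B a a0 i by (auto simp: BIC_def)
    then have 2: "interim n G f i a0 \<le> interim n G f i a" using a0 by (simp add: mult_le_cancel_left_neg)
    show "interim n G f i a = interim n G f i a0" using 1 2 by linarith
  qed
  then show "\<exists>c. AE a in G. a \<in> {..<0} \<longrightarrow> interim n G f i a = c" by blast
qed

lemma per_i:
  assumes S: "SCF n (supp G) f" and B: "BIC n G (supp G) f" and i: "i < n"
  shows "(\<integral>v. f v * v i \<partial>PP) = Uplus G * (\<integral>v. f v * indicator {0<..} (v i) \<partial>PP)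
           - Uminus G * (\<integral>v. f v * indicator {..<0} (v i) \<partial>PP)"
proof -
  note fm = SCF_facts(1)[OF S] and fb = SCF_facts(2)[OF S]
  obtain cp where cp: "AE a in G. a \<in> {0<..} \<longrightarrow> interim n G f i a = cp" using bic_const(1)[OF B i] by blast
  obtain cm where cm: "AE a in G. a \<in> {..<0} \<longrightarrow> interim n G f i a = cm" using bic_const(2)[OF B i] by blast
  have ip: "integrable G (\<lambda>x. x * indicator {0<..} x)" by (rule intS) simp
  have im: "integrable G (\<lambda>x. x * indicator {..<0} x)" by (rule intS) simp
  have ip': "integrable G (indicator {0<..} :: real \<Rightarrow> real)" by (rule integrable_real_indicator) (simp_all add: sG G.emeasure_eq_measure)
  have im': "integrable G (indicator {..<0} :: real \<Rightarrow> real)" by (rule integrable_real_indicator) (simp_all add: sG G.emeasure_eq_measure)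
  have h1: "(\<integral>v. f v * (v i * indicator {0<..} (v i)) \<partial>PP) = cp * (Uplus G * measure G {0<..})"
    using half_gen[OF i fm fb cp ip] Up_eq by (simp add: indicator_def)
  have h3: "(\<integral>v. f v * (v i * indicator {..<0} (v i)) \<partial>PP) = cm * (- (Uminus G * measure G {..<0}))"
    using half_gen[OF i fm fb cm im] Um_eq by (simp add: indicator_def)
  have h2: "(\<integral>v. f v * indicator {0<..} (v i) \<partial>PP) = cp * measure G {0<..}"
    using half_gen[OF i fm fb cp ip'] by (simp add: spaceG)
  have h4: "(\<integral>v. f v * indicator {..<0} (v i) \<partial>PP) = cm * measure G {..<0}"
    using half_gen[OF i fm fb cm im'] by (simp add: spaceG)
  have "(\<integral>v. f v * v i \<partial>PP) = (\<integral>v. f v * (v i * indicator {0<..} (v i)) + f v * (v i * indicator {..<0} (v i)) \<partial>PP)"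
    by (rule Bochner_Integration.integral_cong) (auto simp: indicator_def)
  also have "\<dots> = (\<integral>v. f v * (v i * indicator {0<..} (v i)) \<partial>PP) + (\<integral>v. f v * (v i * indicator {..<0} (v i)) \<partial>PP)"
    by (rule Bochner_Integration.integral_add) (use int_gen[OF i fm fb ip] int_gen[OF i fm fb im] in simp_all)
  finally show ?thesis using h1 h2 h3 h4 by (simp add: algebra_simps)
qed


definition hfun :: "(nat \<Rightarrow> real) \<Rightarrow> real" where
  "hfun v = (\<Sum>i<n. Uplus G * indicator {0<..} (v i) - Uminus G * indicator {..<0} (v i))"

lemma welfare_eq:
  assumes S: "SCF n (supp G) f" and B: "BIC n G (supp G) f"
  shows "welfare n G f = (\<integral>v. f v * hfun v \<partial>PP)"
proof -
  note fm = SCF_facts(1)[OF S] and fb = SCF_facts(2)[OF S]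
  have ip': "integrable G (indicator {0<..} :: real \<Rightarrow> real)" by (rule integrable_real_indicator) (simp_all add: sG G.emeasure_eq_measure)
  have im': "integrable G (indicator {..<0} :: real \<Rightarrow> real)" by (rule integrable_real_indicator) (simp_all add: sG G.emeasure_eq_measure)
  have "welfare n G f = (\<integral>v. (\<Sum>i<n. f v * v i) \<partial>PP)"
    unfolding welfare_def by (simp add: sum_distrib_left)
  also have "\<dots> = (\<Sum>i<n. (\<integral>v. f v * v i \<partial>PP))"
    using Bochner_Integration.integral_sum[where I="{..<n}" and M=PP and f="\<lambda>i v. f v * v i"] int_gen[OF _ fm fb intx] by simp
  also have "\<dots> = (\<Sum>i<n. Uplus G * (\<integral>v. f v * indicator {0<..} (v i) \<partial>PP)
           - Uminus G * (\<integral>v. f v * indicator {..<0} (v i) \<partial>PP))"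
    by (rule sum.cong[OF refl]) (simp add: per_i[OF S B])
  also have "\<dots> = (\<Sum>i<n. (\<integral>v. Uplus G * (f v * indicator {0<..} (v i)) - Uminus G * (f v * indicator {..<0} (v i)) \<partial>PP))"
  proof (rule sum.cong[OF refl])
    fix i assume "i \<in> {..<n}"
    then have i: "i < n" by simp
    show "Uplus G * (\<integral>v. f v * indicator {0<..} (v i) \<partial>PP) - Uminus G * (\<integral>v. f v * indicator {..<0} (v i) \<partial>PP)
      = (\<integral>v. Uplus G * (f v * indicator {0<..} (v i)) - Uminus G * (f v * indicator {..<0} (v i)) \<partial>PP)"
      using int_gen[OF i fm fb ip'] int_gen[OF i fm fb im'] by simp
  qed
  also have "\<dots> = (\<integral>v. (\<Sum>i<n. Uplus G * (f v * indicator {0<..} (v i)) - Uminus G * (f v * indicator {..<0} (v i))) \<partial>PP)"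
    using Bochner_Integration.integral_sum[where I="{..<n}" and M=PP and f="\<lambda>i v. Uplus G * (f v * indicator {0<..} (v i)) - Uminus G * (f v * indicator {..<0} (v i))"]
      int_gen[OF _ fm fb ip'] int_gen[OF _ fm fb im'] by simp
  also have "\<dots> = (\<integral>v. f v * hfun v \<partial>PP)"
    by (rule Bochner_Integration.integral_cong[OF refl]) (simp add: hfun_def sum_distrib_left algebra_simps)
  finally show ?thesis .
qed

lemma card_chi_sum: "real (card (chi n v)) = (\<Sum>i<n. indicator {0<..} (v i))"
proof -
  have "card (chi n v) = (\<Sum>i\<in>{..<n}. indicator {i. 0 < v i} i :: nat)"
    using sum_indicator_eq_card[of "{..<n}" "{i. 0 < v i}"] by (simp add: chi_def Int_def)
  then show ?thesis by (simp add: indicator_def)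
qed

lemma qmaj_alt: "qmaj n k = (\<lambda>v. if real k \<le> (\<Sum>i<n. indicator {0<..} (v i)) then 1 else 0)"
  by (rule ext) (simp add: qmaj_def card_chi_sum[symmetric])

lemma qmaj_meas: "qmaj n k \<in> borel_measurable (PiM {..<n} (\<lambda>_. borel))"
  unfolding qmaj_alt by measurable


lemma card_chi_le: "card (chi n v) \<le> n"
proof -
  have "card (chi n v) \<le> card {..<n}" by (rule card_mono) (auto simp: chi_def)
  then show ?thesis by simp
qed

lemma hfun_eq:
  assumes v: "v \<in> PiE {..<n} (\<lambda>_. supp G)"
  shows "hfun v = Uplus G * card (chi n v) - Uminus G * (real n - card (chi n v))"
proof -
  have ne: "\<And>i. i < n \<Longrightarrow> v i \<noteq> 0" using v s0 by (auto simp: PiE_def Pi_def)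
  have "(\<Sum>i<n. indicator {..<0} (v i) :: real) = (\<Sum>i<n. 1 - indicator {0<..} (v i))"
    by (rule sum.cong[OF refl]) (use ne in \<open>fastforce simp: indicator_def\<close>)
  also have "\<dots> = real n - (\<Sum>i<n. indicator {0<..} (v i))" by (simp add: sum_subtractf)
  finally have neg: "(\<Sum>i<n. indicator {..<0} (v i) :: real) = real n - card (chi n v)"
    by (simp add: card_chi_sum)
  have "hfun v = Uplus G * (\<Sum>i<n. indicator {0<..} (v i)) - Uminus G * (\<Sum>i<n. indicator {..<0} (v i))"
    by (simp add: hfun_def sum_subtractf sum_distrib_left)
  then show ?thesis using neg by (simp add: card_chi_sum)
qed

lemma kbar_props:
  shows "1 \<le> kbar n G" "kbar n G \<le> n" "real (kbar n G) > Uminus G / (Uplus G + Uminus G) * real n"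
    and "\<And>m. m < kbar n G \<Longrightarrow> 1 \<le> m \<Longrightarrow> m \<le> n \<Longrightarrow> \<not> real m > Uminus G / (Uplus G + Uminus G) * real n"
proof -
  let ?P = "\<lambda>k. 1 \<le> k \<and> k \<le> n \<and> real k > Uminus G / (Uplus G + Uminus G) * real n"
  have pos: "Uplus G + Uminus G > 0" using Up_pos Um_nonneg by linarith
  have "Uminus G / (Uplus G + Uminus G) < 1" using pos Up_pos by (simp add: divide_less_eq)
  then have "Uminus G / (Uplus G + Uminus G) * real n < 1 * real n"
    using n2 by (intro mult_strict_right_mono) auto
  then have "?P n" using n2 by simp
  then have "?P (kbar n G)" unfolding kbar_def by (rule LeastI)
  then show "1 \<le> kbar n G" "kbar n G \<le> n" "real (kbar n G) > Uminus G / (Uplus G + Uminus G) * real n" by auto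
  fix m assume "m < kbar n G" "1 \<le> m" "m \<le> n"
  then show "\<not> real m > Uminus G / (Uplus G + Uminus G) * real n"
    using not_less_Least[of m ?P] unfolding kbar_def by auto
qed

lemma key_ineq:
  assumes v: "v \<in> PiE {..<n} (\<lambda>_. supp G)" and t: "0 \<le> t" "t \<le> 1"
  shows "t * hfun v \<le> qmaj n (kbar n G) v * hfun v"
proof -
  let ?m = "card (chi n v)"
  let ?T = "Uminus G / (Uplus G + Uminus G) * real n"
  have pos: "Uplus G + Uminus G > 0" using Up_pos Um_nonneg by linarith
  have h: "hfun v = real ?m * (Uplus G + Uminus G) - Uminus G * real n"
    using hfun_eq[OF v] by (simp add: algebra_simps)
  have T: "?T * (Uplus G + Uminus G) = Uminus G * real n" using pos by simp
  show ?thesis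
  proof (cases "kbar n G \<le> ?m")
    case True
    then have "real ?m > ?T" using kbar_props(3) by linarith
    then have "real ?m * (Uplus G + Uminus G) > ?T * (Uplus G + Uminus G)"
      using pos by (intro mult_strict_right_mono) auto
    then have "hfun v > 0" using h T by linarith
    then have "t * hfun v \<le> hfun v" using t by (simp add: mult_left_le_one_le)
    then show ?thesis using True by (simp add: qmaj_def)
  next
    case False
    have "hfun v \<le> 0"
    proof (cases "?m = 0")
      case True then show ?thesis using h Um_nonneg by simp
    next
      case m0: False
      have "\<not> real ?m > ?T" using kbar_props(4)[of ?m] False m0 card_chi_le by auto
      then have "real ?m * (Uplus G + Uminus G) \<le> ?T * (Uplus G + Uminus G)"
        using pos by (intro mult_right_mono) auto
      then show ?thesis using h T by linarith
    qed
    then have "t * hfun v \<le> 0" using t by (simp add: mult_nonneg_nonpos)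
    then show ?thesis using False by (simp add: qmaj_def)
  qed
qed

lemma qmaj_SCF: "SCF n (supp G) (qmaj n k)"
  unfolding SCF_def using qmaj_meas by (auto simp: qmaj_def)

lemma qmaj_anon: "anonymous n (supp G) (qmaj n k)"
  unfolding anonymous_def
proof (intro ballI allI impI)
  fix v :: "nat \<Rightarrow> real" and \<pi> assume p: "\<pi> permutes {..<n}"
  have img: "\<pi> ` chi n (v \<circ> \<pi>) = chi n v"
  proof
    show "\<pi> ` chi n (v \<circ> \<pi>) \<subseteq> chi n v"
      using permutes_in_image[OF p] by (auto simp: chi_def)
    show "chi n v \<subseteq> \<pi> ` chi n (v \<circ> \<pi>)"
    proof
      fix j assume j: "j \<in> chi n v"
      have "inv \<pi> j \<in> chi n (v \<circ> \<pi>)"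
        using j permutes_in_image[OF permutes_inv[OF p]] permutes_inverses(1)[OF p]
        by (auto simp: chi_def)
      then show "j \<in> \<pi> ` chi n (v \<circ> \<pi>)" using permutes_inverses(1)[OF p] by (metis image_eqI)
    qed
  qed
  have "inj_on \<pi> (chi n (v \<circ> \<pi>))" using permutes_inj[OF p] by (auto simp: inj_on_def inj_def)
  then have "card (chi n (v \<circ> \<pi>)) = card (chi n v)" using card_image img by metis
  then show "qmaj n k (v \<circ> \<pi>) = qmaj n k v" by (simp add: qmaj_def)
qed

lemma qmaj_ord: "ordinal n (supp G) (qmaj n k)"
  unfolding ordinal_def qmaj_def by auto

lemma interim_mono:
  assumes i: "i < n" and le: "\<And>w. qmaj n k (w(i:=b)) \<le> qmaj n k (w(i:=a))"
  shows "interim n G (qmaj n k) i b \<le> interim n G (qmaj n k) i a"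
proof -
  interpret PO: prob_space "PiM ({..<n}-{i}) (\<lambda>_. G)" by (rule prob_space_PiM) (rule P)
  have m: "\<And>c. (\<lambda>w. qmaj n k (w(i:=c))) \<in> borel_measurable (PiM ({..<n}-{i}) (\<lambda>_. G))"
    by (rule meas_upd[OF meas_PP[OF qmaj_meas] i])
  have I: "\<And>c. integrable (PiM ({..<n}-{i}) (\<lambda>_. G)) (\<lambda>w. qmaj n k (w(i:=c)))"
    by (rule PO.integrable_const_bound[where B=1, OF _ m]) (simp add: qmaj_def)
  show ?thesis unfolding interim_def by (rule integral_mono[OF I I le])
qed

lemma qmaj_BIC: "BIC n G (supp G) (qmaj n k)"
  unfolding BIC_def
proof (intro allI impI ballI)
  fix i a b assume i: "i < n" and a: "a \<in> supp G" and b: "b \<in> supp G"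
  show "a * interim n G (qmaj n k) i a \<ge> a * interim n G (qmaj n k) i b"
  proof (cases "a > 0")
    case True
    have "\<And>w. qmaj n k (w(i:=b)) \<le> qmaj n k (w(i:=a))"
    proof -
      fix w :: "nat \<Rightarrow> real"
      have "chi n (w(i:=b)) \<subseteq> chi n (w(i:=a))" using True by (auto simp: chi_def)
      then have "card (chi n (w(i:=b))) \<le> card (chi n (w(i:=a)))" by (rule card_mono[rotated]) (simp add: chi_def)
      then show "qmaj n k (w(i:=b)) \<le> qmaj n k (w(i:=a))" by (simp add: qmaj_def)
    qed
    from interim_mono[OF i this] True show ?thesis by (simp add: mult_left_mono)
  next
    case False
    have "\<And>w. qmaj n k (w(i:=a)) \<le> qmaj n k (w(i:=b))"
    proof -
      fix w :: "nat \<Rightarrow> real"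
      have "chi n (w(i:=a)) \<subseteq> chi n (w(i:=b))" using False by (auto simp: chi_def)
      then have "card (chi n (w(i:=a))) \<le> card (chi n (w(i:=b)))" by (rule card_mono[rotated]) (simp add: chi_def)
      then show "qmaj n k (w(i:=a)) \<le> qmaj n k (w(i:=b))" by (simp add: qmaj_def)
    qed
    from interim_mono[OF i this] False show ?thesis by (simp add: mult_left_mono_neg)
  qed
qed

lemma ind_bound: "0 < (a::real) \<Longrightarrow> 0 \<le> b \<Longrightarrow> \<bar>a * indicator {0<..} x - b * indicator {..<0} (x::real)\<bar> \<le> a + b"
  by (cases "x > 0"; cases "x < 0") auto

lemma optimal:
  assumes S: "SCF n (supp G) f" and B: "BIC n G (supp G) f"
  shows "welfare n G f \<le> welfare n G (qmaj n (kbar n G))"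
proof -
  interpret PPp: prob_space PP by (rule PPprob)
  let ?q = "qmaj n (kbar n G)"
  note fm = SCF_facts(1)[OF S] and fb = SCF_facts(2)[OF S]
  note qm = SCF_facts(1)[OF qmaj_SCF] and qb = SCF_facts(2)[OF qmaj_SCF]
  have hm: "hfun \<in> borel_measurable PP" unfolding hfun_def
  proof (rule borel_measurable_sum)
    fix i assume i: "i \<in> {..<n}"
    have c: "(\<lambda>v. v i) \<in> measurable PP G" using i by simp
    have "(\<lambda>x::real. Uplus G * indicator {0<..} x - Uminus G * indicator {..<0} x) \<in> borel_measurable borel"
      by (intro borel_measurable_diff borel_measurable_times borel_measurable_const borel_measurable_indicator) auto
    then have "(\<lambda>x::real. Uplus G * indicator {0<..} x - Uminus G * indicator {..<0} x) \<in> borel_measurable G"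
      using measurable_cong_sets[OF sG refl] by simp
    from measurable_compose[OF c this]
    show "(\<lambda>v. Uplus G * indicator {0<..} (v i) - Uminus G * indicator {..<0} (v i)) \<in> borel_measurable PP" .
  qed
  have hb: "\<And>v. \<bar>hfun v\<bar> \<le> real n * (Uplus G + Uminus G)"
  proof -
    fix v
    have "\<bar>hfun v\<bar> \<le> (\<Sum>i<n. \<bar>Uplus G * indicator {0<..} (v i) - Uminus G * indicator {..<0} (v i)\<bar>)"
      unfolding hfun_def by (rule sum_abs)
    also have "\<dots> \<le> (\<Sum>i<n. Uplus G + Uminus G)"
      by (rule sum_mono) (rule ind_bound[OF Up_pos Um_nonneg])
    finally show "\<bar>hfun v\<bar> \<le> real n * (Uplus G + Uminus G)" by simp
  qed
  have intg: "integrable PP (\<lambda>v. g v * hfun v)"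
    if gm: "g \<in> borel_measurable PP" and gb: "AE v in PP. 0 \<le> g v \<and> g v \<le> 1" for g
  proof (rule PPp.integrable_const_bound[where B="real n * (Uplus G + Uminus G)"])
    show "AE v in PP. norm (g v * hfun v) \<le> real n * (Uplus G + Uminus G)"
      using gb
    proof (rule eventually_mono)
      fix v assume "0 \<le> g v \<and> g v \<le> 1"
      then have "\<bar>g v * hfun v\<bar> \<le> \<bar>hfun v\<bar>" using abs_le1 by blast
      then show "norm (g v * hfun v) \<le> real n * (Uplus G + Uminus G)" using hb[of v] by simp
    qed
    show "(\<lambda>v. g v * hfun v) \<in> borel_measurable PP" using gm hm by simp
  qed
  have "welfare n G f = (\<integral>v. f v * hfun v \<partial>PP)" by (rule welfare_eq[OF S B])
  also have "\<dots> \<le> (\<integral>v. ?q v * hfun v \<partial>PP)"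
  proof (rule integral_mono_AE[OF intg[OF fm fb] intg[OF qm qb]])
    show "AE v in PP. f v * hfun v \<le> ?q v * hfun v"
      by (rule eventually_mono[OF AE_conjI[OF AE_PP fb]]) (blast intro: key_ineq)
  qed
  also have "\<dots> = welfare n G ?q" by (rule welfare_eq[OF qmaj_SCF qmaj_BIC, symmetric])
  finally show ?thesis .
qed

end

theorem proposition1:
  fixes G :: "real measure" and n :: nat
  assumes "n \<ge> 2"
    and "prob_space G"
    and "sets G = sets borel"
    and "0 \<notin> supp G"
    and "integrable G (\<lambda>x. x)"
    and "0 < measure G {0<..}" and "measure G {0<..} < 1"
  shows "SCF n (supp G) (qmaj n (kbar n G)) \<and> anonymous n (supp G) (qmaj n (kbar n G))
     \<and> BIC n G (supp G) (qmaj n (kbar n G))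
     \<and> (\<forall>f. SCF n (supp G) f \<and> anonymous n (supp G) f \<and> BIC n G (supp G) f
            \<longrightarrow> welfare n G f \<le> welfare n G (qmaj n (kbar n G)))
     \<and> ordinal n (supp G) (qmaj n (kbar n G))"
proof -
  have st: "setting G n" unfolding setting_def using assms by blast
  have 1: "SCF n (supp G) (qmaj n (kbar n G))" by (rule setting.qmaj_SCF[OF st])
  have 2: "anonymous n (supp G) (qmaj n (kbar n G))" by (rule setting.qmaj_anon[OF st])
  have 3: "BIC n G (supp G) (qmaj n (kbar n G))" by (rule setting.qmaj_BIC[OF st])
  have 4: "ordinal n (supp G) (qmaj n (kbar n G))" by (rule setting.qmaj_ord[OF st])
  have 5: "\<forall>f. SCF n (supp G) f \<and> anonymous n (supp G) f \<and> BIC n G (supp G) f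
            \<longrightarrow> welfare n G f \<le> welfare n G (qmaj n (kbar n G))"
    using setting.optimal[OF st] by blast
  show ?thesis using 1 2 3 4 5 by blast
qed

end
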